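(* Let $\alpha\in[0,1]$. If $f(z)=z+\sum_{n\ge2}a_nz^n$ is analytic on $\mathbb{U}$ and $\operatorname{Re}\big(1+\frac{zf''(z)}{f'(z)}\big)>\alpha$ for all $z\in\mathbb{U}$ (i.e. $f$ is convex of order $\alpha$), then $$|a_3^2-a_4^2|\le\frac{(1-\alpha)^2(3-2\alpha)^2}{9}+\frac{(1-\alpha)^2(2-\alpha)^2(3-2\alpha)^2}{36}.$$
   Context: $\mathbb{U}$ is the open unit disk. *)

theory Defs
  imports "HOL-Complex_Analysis.Complex_Analysis"
begin

definition taylor_coeff :: "(complex \<Rightarrow> complex) \<Rightarrow> nat \<Rightarrow> complex" where
  "taylor_coeff f n = (deriv ^^ n) f 0 / of_nat (fact n)"

end

theory Submission
  imports Defs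
begin

lemma carath_r:
  fixes h :: "complex \<Rightarrow> complex"
  assumes hol: "h holomorphic_on ball 0 1" and pos: "\<And>z. z \<in> ball 0 1 \<Longrightarrow> Re (h z) > 0"
    and r: "0 < r" "r < 1"
  shows "cmod ((deriv ^^ Suc m) h 0) / fact (Suc m) * r ^ Suc m \<le> 2 * Re (h 0)"
proof -
  define k where "k = Suc m"
  define E where "E t = exp (2 * of_real pi * \<i> * of_real t)" for t :: real
  define g where "g = circlepath 0 r"
  define D where "D = (deriv ^^ k) h 0"
  have gE: "g t = r * E t" for t by (simp add: g_def circlepath E_def)
  have vd: "vector_derivative g (at t within {0..1}) = 2*pi*\<i>*r*E t" if "t \<in> {0..1}" for t
    using that by (simp add: g_def E_def vector_derivative_circlepath01)
  have E1: "cmod (E t) = 1" for t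
  proof -
    have "E t = exp (\<i> * of_real (2*pi*t))" by (simp add: E_def algebra_simps)
    then show ?thesis by (simp only: norm_exp_i_times)
  qed
  have Enz: "E t \<noteq> 0" for t using E1[of t] by auto
  have Ecnj: "cnj (E t) = inverse (E t)" for t
  proof -
    have "E t * cnj (E t) = 1" using complex_norm_square[of "E t"] E1[of t] by simp
    then show ?thesis by (metis inverse_unique)
  qed
  have gin: "g t \<in> ball 0 1" for t using r by (simp add: gE norm_mult E1)
  have cont: "continuous_on (cball 0 r) h"
    by (rule holomorphic_on_imp_continuous_on, rule holomorphic_on_subset[OF hol]) (use r in auto)
  have holr: "h holomorphic_on ball 0 r"
    by (rule holomorphic_on_subset[OF hol]) (use r in auto)
  have rnz: "complex_of_real r \<noteq> 0" using r by simp
  have "((\<lambda>u. h u / (u - 0) ^ Suc k) has_contour_integral ((2 * pi * \<i>) / (fact k) * D)) g"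
    unfolding g_def D_def
    by (rule Cauchy_has_contour_integral_higher_derivative_circlepath[OF cont holr]) (use r in simp)
  then have "((\<lambda>t. h (g t) / (g t - 0) ^ Suc k * vector_derivative g (at t within {0..1}))
      has_integral ((2 * pi * \<i>) / (fact k) * D)) {0..1}"
    by (simp add: has_contour_integral_def)
  then have "((\<lambda>t. (2 * pi * \<i> / r^k) * (h (g t) / E t ^ k))
      has_integral ((2 * pi * \<i> / r^k) * (D / fact k * r^k))) {0..1}"
    apply (rule has_integral_eq_rhs[OF has_integral_eq, rotated])
    using rnz Enz by (auto simp: vd gE field_simps)
  then have I1: "((\<lambda>t. h (g t) / E t ^ k) has_integral (D / fact k * r^k)) {0..1}"
    using rnz by (subst (asm) has_integral_mult_right_iff) auto
  have "((\<lambda>u. h u * u ^ m) has_contour_integral 0) g"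
    by (rule Cauchy_theorem_convex_simple[of _ "ball 0 1"])
       (use r in \<open>auto simp: g_def intro!: holomorphic_intros hol\<close>)
  then have "((\<lambda>t. h (g t) * (g t) ^ m * vector_derivative g (at t within {0..1}))
      has_integral 0) {0..1}"
    by (simp add: has_contour_integral_def)
  then have "((\<lambda>t. (2 * pi * \<i> * r^k) * (h (g t) * E t ^ k))
      has_integral ((2 * pi * \<i> * r^k) * 0)) {0..1}"
    apply (rule has_integral_eq_rhs[OF has_integral_eq, rotated])
    using rnz Enz by (auto simp: vd gE field_simps k_def)
  then have I2: "((\<lambda>t. h (g t) * E t ^ k) has_integral 0) {0..1}"
    using rnz by (subst (asm) has_integral_mult_right_iff) auto
  then have I2': "((\<lambda>t. cnj (h (g t)) / E t ^ k) has_integral 0) {0..1}"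
    using has_integral_cnj[of "\<lambda>t. h (g t) * E t ^ k" 0 "{0..1}"]
    by (simp add: o_def Ecnj divide_inverse power_inverse)
  have I12: "((\<lambda>t. (2 * Re (h (g t))) / E t ^ k) has_integral (D / fact k * r^k)) {0..1}"
    using has_integral_add[OF I1 I2'] by (simp add: add_divide_distrib[symmetric] complex_add_cnj)
  have "((\<lambda>u. h u / (u - 0) ^ Suc 0) has_contour_integral ((2 * pi * \<i>) / (fact 0) * (deriv ^^ 0) h 0)) g"
    unfolding g_def
    by (rule Cauchy_has_contour_integral_higher_derivative_circlepath[OF cont holr]) (use r in simp)
  then have "((\<lambda>t. h (g t) / (g t - 0) ^ Suc 0 * vector_derivative g (at t within {0..1}))
      has_integral ((2 * pi * \<i>) * h 0)) {0..1}"
    by (simp add: has_contour_integral_def)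
  then have "((\<lambda>t. (2 * pi * \<i>) * h (g t)) has_integral ((2 * pi * \<i>) * h 0)) {0..1}"
    apply (rule has_integral_eq_rhs[OF has_integral_eq, rotated])
    using rnz Enz by (auto simp: vd gE field_simps)
  then have I3: "((\<lambda>t. h (g t)) has_integral h 0) {0..1}"
    by (subst (asm) has_integral_mult_right_iff) auto
  have I3': "((\<lambda>t. 2 * Re (h (g t))) has_integral 2 * Re (h 0)) {0..1}"
    using has_integral_mult_right[OF has_integral_linear[OF I3 bounded_linear_Re], of 2]
    by (simp add: o_def)
  have "norm (integral {0..1} (\<lambda>t. (2 * Re (h (g t))) / E t ^ k)) \<le> integral {0..1} (\<lambda>t. 2 * Re (h (g t)))"
  proof (rule integral_norm_bound_integral)
    fix t :: real
    have "norm ((2 * Re (h (g t))) / E t ^ k) = 2 * Re (h (g t))"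
      using pos[OF gin[of t]] by (simp add: norm_divide norm_power E1)
    then show "norm ((2 * Re (h (g t))) / E t ^ k) \<le> 2 * Re (h (g t))" by simp
  qed (use I12 I3' in auto)
  then have "norm (D / fact k * r^k) \<le> 2 * Re (h 0)"
    using integral_unique[OF I12] integral_unique[OF I3'] by simp
  moreover have "cmod (fact k) = fact k"
    by (metis abs_of_nonneg fact_ge_zero norm_of_real of_real_fact)
  ultimately show ?thesis using r unfolding k_def[symmetric] D_def[symmetric]
    by (simp add: norm_mult norm_divide norm_power)
qed

lemma carath:
  fixes h :: "complex \<Rightarrow> complex"
  assumes hol: "h holomorphic_on ball 0 1" and pos: "\<And>z. z \<in> ball 0 1 \<Longrightarrow> Re (h z) > 0"
  shows "cmod ((deriv ^^ Suc m) h 0) \<le> fact (Suc m) * (2 * Re (h 0))"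
proof -
  define A where "A = cmod ((deriv ^^ Suc m) h 0) / fact (Suc m)"
  have lim: "((\<lambda>r. A * r ^ Suc m) \<longlongrightarrow> A * 1 ^ Suc m) (at_left (1::real))"
    by (intro tendsto_intros)
  have ev: "eventually (\<lambda>r. A * r ^ Suc m \<le> 2 * Re (h 0)) (at_left (1::real))"
  proof -
    have "eventually (\<lambda>r. r \<in> {0<..<1}) (at_left (1::real))"
      by (rule eventually_at_left_real) simp
    then show ?thesis by eventually_elim (use carath_r[OF hol pos] in \<open>auto simp: A_def\<close>)
  qed
  have "A \<le> 2 * Re (h 0)"
    using tendsto_le[OF trivial_limit_at_left_real tendsto_const lim ev] by simp
  moreover have "(0::real) < fact (Suc m)" by (rule fact_gt_zero)
  ultimately show ?thesis unfolding A_def by (simp add: pos_divide_le_eq mult.commute del: fact_Suc)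
qed

lemma deriv_funpow_comp: "(deriv ^^ j) ((deriv ^^ i) f) = (deriv ^^ (j + i)) f"
  by (simp add: funpow_add)

theorem corollary2:
  fixes f :: "complex \<Rightarrow> complex" and \<alpha> :: real
  assumes "0 \<le> \<alpha>" and "\<alpha> \<le> 1"
    and "f holomorphic_on ball 0 1"
    and "f 0 = 0" and "deriv f 0 = 1"
    and "\<And>z. z \<in> ball 0 1 \<Longrightarrow> deriv f z \<noteq> 0"
    and "\<And>z. z \<in> ball 0 1 \<Longrightarrow>
           Re (1 + z * (deriv ^^ 2) f z / deriv f z) > \<alpha>"
  shows "cmod ((taylor_coeff f 3)\<^sup>2 - (taylor_coeff f 4)\<^sup>2)
         \<le> (1 - \<alpha>)\<^sup>2 * (3 - 2 * \<alpha>)\<^sup>2 / 9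
            + (1 - \<alpha>)\<^sup>2 * (2 - \<alpha>)\<^sup>2 * (3 - 2 * \<alpha>)\<^sup>2 / 36"
proof -
  define S where "S = ball (0::complex) 1"
  have S: "open S" "0 \<in> S" by (auto simp: S_def)
  have holf: "f holomorphic_on S" using assms(3) by (simp add: S_def)
  have hol1: "deriv f holomorphic_on S" using holf S by (intro holomorphic_deriv)
  have hol2: "(deriv ^^ 2) f holomorphic_on S" using holf S by (intro holomorphic_higher_deriv)
  define q where "q z = z * (deriv ^^ 2) f z / deriv f z" for z
  have holq: "q holomorphic_on S"
    unfolding q_def using assms(6) hol1 hol2 by (auto simp: S_def intro!: holomorphic_intros)
  define \<beta> where "\<beta> = 1 - \<alpha>"
  define h where "h z = q z + \<beta>" for z
  have holh: "h holomorphic_on ball 0 1" unfolding h_def using holq by (auto simp: S_def intro!: holomorphic_intros)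
  have posh: "Re (h z) > 0" if "z \<in> ball 0 1" for z
    using assms(7)[OF that] by (simp add: h_def q_def \<beta>_def)
  have q0: "q 0 = 0" by (simp add: q_def)
  have h0: "Re (h 0) = \<beta>" by (simp add: h_def q0)
  have hq: "(deriv ^^ Suc m) h 0 = (deriv ^^ Suc m) q 0" for m
    unfolding h_def using higher_deriv_add[OF holq _ S(1) S(2), of "\<lambda>_. complex_of_real \<beta>" "Suc m"]
    by simp
  have Qb: "cmod ((deriv ^^ Suc m) q 0) \<le> fact (Suc m) * (2 * \<beta>)" for m
    using carath[OF holh posh, of m] by (simp only: hq h0)
  define Q where "Q k = (deriv ^^ k) q 0" for k
  define D where "D k = (deriv ^^ k) f 0" for k
  have Q1: "cmod (Q 1) \<le> 2 * \<beta>" using Qb[of 0] by (simp add: Q_def)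
  have Q2: "cmod (Q 2) \<le> 4 * \<beta>" using Qb[of 1] by (simp add: Q_def numeral_2_eq_2)
  have Q3: "cmod (Q 3) \<le> 12 * \<beta>" using Qb[of 2] by (simp add: Q_def numeral_3_eq_3 numeral_2_eq_2)
  have holL: "(\<lambda>w. w * (deriv ^^ 2) f w) holomorphic_on S" using hol2 holf S by (auto intro!: holomorphic_intros)
  have holR: "(\<lambda>w. q w * deriv f w) holomorphic_on S" using holq hol1 holf S by (auto intro!: holomorphic_intros)
  have rel: "(deriv ^^ n) (\<lambda>w. w * (deriv ^^ 2) f w) 0 = (deriv ^^ n) (\<lambda>w. q w * deriv f w) 0" for n
    by (rule higher_deriv_transform_within_open[OF holL holR S]) (use assms(6) in \<open>auto simp: q_def S_def\<close>)
  have L: "(deriv ^^ n) (\<lambda>w. w * (deriv ^^ 2) f w) 0 =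
      (\<Sum>i = 0..n. of_nat (n choose i) * (deriv ^^ i) (\<lambda>w. w) 0 * D (n - i + 2))" for n
    using higher_deriv_mult[OF _ hol2 S, of "\<lambda>w. w" n] by (simp add: deriv_funpow_comp D_def)
  have R: "(deriv ^^ n) (\<lambda>w. q w * deriv f w) 0 =
      (\<Sum>i = 0..n. of_nat (n choose i) * Q i * D (n - i + 1))" for n
    using higher_deriv_mult[OF holq hol1 S, of n]
    by (simp add: deriv_funpow_comp[of _ 1, simplified] D_def Q_def)
  have D1: "D (Suc 0) = 1" using assms(5) by (simp add: D_def)
  have Q0: "Q 0 = 0" using q0 by (simp add: Q_def)
  have e1: "D 2 = Q 1" using rel[of 1] unfolding L R by (simp add: D1 Q0 eval_nat_numeral)
  have e2: "2 * D 3 = 2 * Q 1 * D 2 + Q 2" using rel[of 2] unfolding L R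
    by (simp add: D1 Q0 eval_nat_numeral)
  have e3: "3 * D 4 = 3 * Q 1 * D 3 + 3 * Q 2 * D 2 + Q 3" using rel[of 3] unfolding L R
    by (simp add: D1 Q0 eval_nat_numeral)
  have b0: "0 \<le> \<beta>" using assms(2) by (simp add: \<beta>_def)
  have n2: "cmod (D 2) \<le> 2 * \<beta>" using e1 Q1 by simp
  have d3: "D 3 = Q 1 * D 2 + Q 2 / 2" using e2 by (simp add: field_simps)
  have n3: "cmod (D 3) \<le> 2 * \<beta> * (2 * \<beta>) + 4 * \<beta> / 2"
  proof -
    have "cmod (D 3) \<le> cmod (Q 1) * cmod (D 2) + cmod (Q 2) / 2"
      unfolding d3 using norm_triangle_ineq[of "Q 1 * D 2" "Q 2 / 2"] by (simp add: norm_mult norm_divide)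
    also have "\<dots> \<le> 2 * \<beta> * (2 * \<beta>) + 4 * \<beta> / 2"
      using Q1 Q2 n2 b0 by (intro add_mono mult_mono divide_right_mono) auto
    finally show ?thesis .
  qed
  have d4: "D 4 = Q 1 * D 3 + Q 2 * D 2 + Q 3 / 3" using e3 by (simp add: field_simps)
  have n4: "cmod (D 4) \<le> 2 * \<beta> * (2 * \<beta> * (2 * \<beta>) + 4 * \<beta> / 2) + 4 * \<beta> * (2 * \<beta>) + 12 * \<beta> / 3"
  proof -
    have "cmod (D 4) \<le> cmod (Q 1) * cmod (D 3) + cmod (Q 2) * cmod (D 2) + cmod (Q 3) / 3"
      unfolding d4 using norm_triangle_ineq[of "Q 1 * D 3 + Q 2 * D 2" "Q 3 / 3"]
        norm_triangle_ineq[of "Q 1 * D 3" "Q 2 * D 2"] by (simp add: norm_mult norm_divide)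
    also have "\<dots> \<le> 2 * \<beta> * (2 * \<beta> * (2 * \<beta>) + 4 * \<beta> / 2) + 4 * \<beta> * (2 * \<beta>) + 12 * \<beta> / 3"
      using Q1 Q2 Q3 n2 n3 b0 by (intro add_mono mult_mono divide_right_mono) auto
    finally show ?thesis .
  qed
  have tc3: "taylor_coeff f 3 = D 3 / 6" by (simp add: taylor_coeff_def D_def eval_nat_numeral)
  have tc4: "taylor_coeff f 4 = D 4 / 24" by (simp add: taylor_coeff_def D_def eval_nat_numeral)
  define X where "X = (2 * \<beta> * (2 * \<beta>) + 4 * \<beta> / 2) / 6"
  define Y where "Y = (2 * \<beta> * (2 * \<beta> * (2 * \<beta>) + 4 * \<beta> / 2) + 4 * \<beta> * (2 * \<beta>) + 12 * \<beta> / 3) / 24"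
  have a3: "cmod (taylor_coeff f 3) \<le> X" using n3 by (simp add: tc3 X_def norm_divide)
  have a4: "cmod (taylor_coeff f 4) \<le> Y" using n4 by (simp add: tc4 Y_def norm_divide)
  have "cmod ((taylor_coeff f 3)\<^sup>2 - (taylor_coeff f 4)\<^sup>2) \<le> (cmod (taylor_coeff f 3))\<^sup>2 + (cmod (taylor_coeff f 4))\<^sup>2"
    using norm_triangle_ineq4[of "(taylor_coeff f 3)\<^sup>2" "(taylor_coeff f 4)\<^sup>2"] by (simp add: norm_power)
  also have "\<dots> \<le> X\<^sup>2 + Y\<^sup>2"
    using a3 a4 by (intro add_mono power_mono) auto
  also have "\<dots> = (1 - \<alpha>)\<^sup>2 * (3 - 2 * \<alpha>)\<^sup>2 / 9
            + (1 - \<alpha>)\<^sup>2 * (2 - \<alpha>)\<^sup>2 * (3 - 2 * \<alpha>)\<^sup>2 / 36"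
    unfolding X_def Y_def \<beta>_def by (simp add: power2_eq_square field_simps)
  finally show ?thesis .
qed

end
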